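(* Let $G$ be an abelian profinite group. Then $G$ is a profinite-$C$ group if and only if $G$ is an internal cartesian product of subgroups of prime order.
   Context: A permutable complement of a subgroup $H$ of a group $G$ is a subgroup $K$ with $G=HK$ and $H\cap K=1$. A profinite group $G$ is a profinite-$C$ group if every closed subgroup of $G$ has a closed permutable complement in $G$. A profinite group $G$ is the internal cartesian product of a family $\{H_i\}_{i\in I}$ of its subgroups if: each $H_i$ is a closed normal subgroup of $G$; $G$ is the topological closure of $\langle H_i\mid i\in I\rangle$; and $\bigcap_{i\in I}\overline{\langle H_j\mid j\ne i\rangle}=1$. *)

theory Defs
  imports "HOL-Analysis.Analysis" "HOL-Algebra.Algebra"
begin

definition topological_group :: "('a, 'b) monoid_scheme \<Rightarrow> 'a topology \<Rightarrow> bool" where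
  "topological_group G T \<longleftrightarrow>
     group G \<and> topspace T = carrier G \<and>
     continuous_map (prod_topology T T) T (\<lambda>(x, y). x \<otimes>\<^bsub>G\<^esub> y) \<and>
     continuous_map T T (\<lambda>x. inv\<^bsub>G\<^esub> x)"

definition profinite_group :: "('a, 'b) monoid_scheme \<Rightarrow> 'a topology \<Rightarrow> bool" where
  "profinite_group G T \<longleftrightarrow>
     topological_group G T \<and> compact_space T \<and> Hausdorff_space T \<and>
     (\<forall>S. connectedin T S \<longrightarrow> (\<exists>a. S \<subseteq> {a}))"

definition permutable_complement :: "('a, 'b) monoid_scheme \<Rightarrow> 'a set \<Rightarrow> 'a set \<Rightarrow> bool" where
  "permutable_complement G H K \<longleftrightarrow>
     subgroup K G \<and> H <#>\<^bsub>G\<^esub> K = carrier G \<and> H \<inter> K = {\<one>\<^bsub>G\<^esub>}"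

definition profinite_C_group :: "('a, 'b) monoid_scheme \<Rightarrow> 'a topology \<Rightarrow> bool" where
  "profinite_C_group G T \<longleftrightarrow>
     profinite_group G T \<and>
     (\<forall>H. subgroup H G \<and> closedin T H \<longrightarrow>
        (\<exists>K. closedin T K \<and> permutable_complement G H K))"

text \<open>Internal cartesian product of the family H indexed by I. The intersection is
  taken inside the carrier (relevant only for the empty family).\<close>
definition internal_cartesian_product ::
    "('a, 'b) monoid_scheme \<Rightarrow> 'a topology \<Rightarrow> 'i set \<Rightarrow> ('i \<Rightarrow> 'a set) \<Rightarrow> bool" where
  "internal_cartesian_product G T I H \<longleftrightarrow>
     (\<forall>i\<in>I. closedin T (H i) \<and> H i \<lhd> G) \<and>
     T closure_of (generate G (\<Union>i\<in>I. H i)) = carrier G \<and>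
     carrier G \<inter> (\<Inter>i\<in>I. T closure_of (generate G (\<Union>j\<in>I - {i}. H j))) = {\<one>\<^bsub>G\<^esub>}"

end

theory Submission
  imports Defs
begin

locale abprof = comm_group G for G :: "('a, 'b) monoid_scheme" (structure) +
  fixes T :: "'a topology"
  assumes prof: "profinite_group G T"
begin

lemma top: "topspace T = carrier G"
  using prof unfolding profinite_group_def topological_group_def by blast
lemma cpt: "compact_space T"
  using prof unfolding profinite_group_def by blast
lemma haus: "Hausdorff_space T"
  using prof unfolding profinite_group_def by blast
lemma tdisc: "connectedin T S \<Longrightarrow> \<exists>a. S \<subseteq> {a}"
  using prof unfolding profinite_group_def by blast
lemma multc: "continuous_map (prod_topology T T) T (\<lambda>(x, y). x \<otimes> y)"
  using prof unfolding profinite_group_def topological_group_def by blast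
lemma invc: "continuous_map T T (\<lambda>x. inv x)"
  using prof unfolding profinite_group_def topological_group_def by blast

lemma cont_mult:
  assumes "continuous_map T T f" "continuous_map T T g"
  shows "continuous_map T T (\<lambda>x. f x \<otimes> g x)"
  using continuous_map_compose[OF continuous_map_pairedI[OF assms] multc]
  by (simp add: o_def)

lemma cont_inv:
  assumes "continuous_map T T f"
  shows "continuous_map T T (\<lambda>x. inv (f x))"
  using continuous_map_compose[OF assms invc] by (simp add: o_def)

lemma cont_const: "a \<in> carrier G \<Longrightarrow> continuous_map T T (\<lambda>x. a)"
  by (simp add: top)

lemma cont_id: "continuous_map T T (\<lambda>x. x)"
  by simp

lemma closed_pre:
  assumes "continuous_map T T f" "closedin T S"
  shows "closedin T {x \<in> carrier G. f x \<in> S}"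
  using closedin_continuous_map_preimage[OF assms] by (simp add: top)

lemma open_pre:
  assumes "continuous_map T T f" "openin T S"
  shows "openin T {x \<in> carrier G. f x \<in> S}"
  using openin_continuous_map_preimage[OF assms] by (simp add: top)

lemma closure_subgroup:
  assumes "subgroup S G"
  shows "subgroup (T closure_of S) G"
proof -
  have Sc: "S \<subseteq> carrier G" using assms subgroup.subset by blast
  have sub: "T closure_of S \<subseteq> carrier G"
    using closure_of_subset_topspace[of T S] unfolding top .
  have SS: "S \<subseteq> T closure_of S"
    using closure_of_subset[of S T] Sc unfolding top by simp
  have mc: "x \<otimes> y \<in> T closure_of S" if "x \<in> T closure_of S" "y \<in> T closure_of S" for x y
  proof -
    have "(x, y) \<in> prod_topology T T closure_of (S \<times> S)"
      using that unfolding closure_of_Times by simp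
    then have "(\<lambda>(x, y). x \<otimes> y) (x, y) \<in> (\<lambda>(x, y). x \<otimes> y) ` (prod_topology T T closure_of (S \<times> S))"
      by (rule imageI)
    also have "\<dots> \<subseteq> T closure_of ((\<lambda>(x, y). x \<otimes> y) ` (S \<times> S))"
      by (rule continuous_map_image_closure_subset[OF multc])
    also have "\<dots> \<subseteq> T closure_of S"
    proof (rule closure_of_mono)
      show "(\<lambda>(x, y). x \<otimes> y) ` (S \<times> S) \<subseteq> S"
        using subgroup.m_closed[OF assms] by auto
    qed
    finally show ?thesis by simp
  qed
  have ic: "inv x \<in> T closure_of S" if "x \<in> T closure_of S" for x
  proof -
    have "inv x \<in> (\<lambda>x. inv x) ` (T closure_of S)"
      using that by (rule imageI)
    also have "\<dots> \<subseteq> T closure_of ((\<lambda>x. inv x) ` S)"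
      by (rule continuous_map_image_closure_subset[OF invc])
    also have "\<dots> \<subseteq> T closure_of S"
    proof (rule closure_of_mono)
      show "(\<lambda>x. inv x) ` S \<subseteq> S"
        using subgroup.m_inv_closed[OF assms] by auto
    qed
    finally show ?thesis .
  qed
  have one: "\<one> \<in> T closure_of S" using SS subgroup.one_closed[OF assms] by blast
  show ?thesis
  proof (rule subgroup.intro)
    show "T closure_of S \<subseteq> carrier G" by (rule sub)
    show "\<one> \<in> T closure_of S" by (rule one)
    fix x y assume "x \<in> T closure_of S" "y \<in> T closure_of S"
    then show "x \<otimes> y \<in> T closure_of S" by (rule mc)
  next
    fix x assume "x \<in> T closure_of S"
    then show "inv x \<in> T closure_of S" by (rule ic)
  qed
qed

lemma finite_closed:
  assumes "finite S" "S \<subseteq> carrier G"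
  shows "closedin T S"
proof -
  have "S = \<Union>((\<lambda>x. {x}) ` S)" by auto
  moreover have "closedin T (\<Union>((\<lambda>x. {x}) ` S))"
  proof (rule closedin_Union)
    show "finite ((\<lambda>x. {x}) ` S)" using assms by simp
    fix U assume "U \<in> (\<lambda>x. {x}) ` S"
    then obtain x where "x \<in> S" "U = {x}" by blast
    then show "closedin T U" using closedin_Hausdorff_singleton[OF haus, of x] top assms(2) by auto
  qed
  ultimately show ?thesis by simp
qed

lemma set_mult_iff: "g \<in> A <#> B \<longleftrightarrow> (\<exists>a\<in>A. \<exists>b\<in>B. g = a \<otimes> b)"
  by (auto simp: set_mult_def)

lemma cont_lmul: "a \<in> carrier G \<Longrightarrow> continuous_map T T (\<lambda>y. a \<otimes> y)"
  using cont_mult[OF cont_const cont_id] by blast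

lemma closed_coset:
  assumes "closedin T S" "a \<in> carrier G"
  shows "closedin T {y \<in> carrier G. inv a \<otimes> y \<in> S}"
  using closed_pre[OF cont_lmul assms(1)] assms(2) by simp

lemma open_coset:
  assumes "openin T S" "a \<in> carrier G"
  shows "openin T {y \<in> carrier G. inv a \<otimes> y \<in> S}"
  using open_pre[OF cont_lmul assms(1)] assms(2) by simp

lemma closed_finite_mult:
  assumes "finite A" "A \<subseteq> carrier G" "closedin T S"
  shows "closedin T (A <#> S)"
proof -
  have Sc: "S \<subseteq> carrier G" using closedin_subset[OF assms(3)] top by simp
  have eq: "A <#> S = \<Union>((\<lambda>a. {y \<in> carrier G. inv a \<otimes> y \<in> S}) ` A)"
  proof (rule Set.set_eqI)
    fix g
    show "g \<in> A <#> S \<longleftrightarrow> g \<in> \<Union>((\<lambda>a. {y \<in> carrier G. inv a \<otimes> y \<in> S}) ` A)"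
    proof
      assume "g \<in> A <#> S"
      then obtain a s where "a \<in> A" "s \<in> S" "g = a \<otimes> s" by (auto simp: set_mult_iff)
      moreover have "inv a \<otimes> (a \<otimes> s) = s" using \<open>a \<in> A\<close> \<open>s \<in> S\<close> assms(2) Sc
        by (simp add: subsetD flip: m_assoc)
      ultimately have "g \<in> {y \<in> carrier G. inv a \<otimes> y \<in> S}"
        using assms(2) Sc by auto
      then show "g \<in> \<Union>((\<lambda>a. {y \<in> carrier G. inv a \<otimes> y \<in> S}) ` A)"
        using \<open>a \<in> A\<close> by blast
    next
      assume "g \<in> \<Union>((\<lambda>a. {y \<in> carrier G. inv a \<otimes> y \<in> S}) ` A)"
      then obtain a where a: "a \<in> A" "g \<in> carrier G" "inv a \<otimes> g \<in> S" by auto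
      then have "g = a \<otimes> (inv a \<otimes> g)" using assms(2)
        by (simp add: subsetD flip: m_assoc)
      then show "g \<in> A <#> S" using a by (auto simp: set_mult_iff)
    qed
  qed
  show ?thesis unfolding eq
  proof (rule closedin_Union)
    show "finite ((\<lambda>a. {y \<in> carrier G. inv a \<otimes> y \<in> S}) ` A)" using assms by simp
    fix U assume "U \<in> (\<lambda>a. {y \<in> carrier G. inv a \<otimes> y \<in> S}) ` A"
    then show "closedin T U" using closed_coset[OF assms(3)] assms(2) by auto
  qed
qed

lemma prime_order_gen:
  assumes H: "subgroup H G" and p: "Factorial_Ring.prime (card H)" and h: "h \<in> H" "h \<noteq> \<one>"
  shows "H = generate G {h}"
proof -
  have hc: "h \<in> carrier G" using H h subgroup.subset by blast
  have K: "subgroup (generate G {h}) G" using generate_is_subgroup hc by simp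
  have KH: "generate G {h} \<subseteq> H" using generate_subgroup_incl H h by simp
  have fin: "finite H" using p by (metis card.infinite not_prime_0)
  have gH: "group (G\<lparr>carrier := H\<rparr>)" using subgroup_imp_group H by blast
  have KsH: "subgroup (generate G {h}) (G\<lparr>carrier := H\<rparr>)" using subgroup_incl K H KH by blast
  have "card (rcosets\<^bsub>G\<lparr>carrier := H\<rparr>\<^esub> (generate G {h})) * card (generate G {h}) = card H"
    using group.lagrange[OF gH KsH] by (simp add: order_def)
  then have dvd: "card (generate G {h}) dvd card H" by (metis dvd_triv_right)
  have "{\<one>, h} \<subseteq> generate G {h}"
    using generate.one generate.incl[of h "{h}"] by auto
  moreover have "finite (generate G {h})" using fin KH finite_subset by blast
  ultimately have "card {\<one>, h} \<le> card (generate G {h})" by (rule card_mono[rotated])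
  then have "card (generate G {h}) \<noteq> 1" using h by simp
  then have "card (generate G {h}) = card H" using p dvd unfolding prime_nat_iff by blast
  then show ?thesis using card_subset_eq[OF fin KH] by simp
qed

lemma prime_order_pow:
  assumes H: "subgroup H G" and p: "Factorial_Ring.prime (card H)" and h: "h \<in> H" "h \<noteq> \<one>" and y: "y \<in> H"
  shows "\<exists>k::int. y = h [^] k"
proof -
  have hc: "h \<in> carrier G" using H h subgroup.subset by blast
  show ?thesis using prime_order_gen[OF assms(1-4)] generate_pow[OF hc] y by auto
qed

lemma clopen_sep:
  assumes x: "x \<in> carrier G" "x \<noteq> \<one>"
  shows "\<exists>U. closedin T U \<and> openin T U \<and> \<one> \<in> U \<and> x \<notin> U"
proof (rule ccontr)
  assume nU: "\<not> ?thesis"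
  have q: "quasi_component_of T \<one> x"
    unfolding quasi_component_of_def
  proof (intro conjI allI impI)
    show "\<one> \<in> topspace T" "x \<in> topspace T" using x top by auto
    fix U assume U: "closedin T U \<and> openin T U"
    show "\<one> \<in> U \<longleftrightarrow> x \<in> U"
    proof
      assume "\<one> \<in> U" then show "x \<in> U" using nU U by blast
    next
      assume xU: "x \<in> U"
      show "\<one> \<in> U"
      proof (rule ccontr)
        assume "\<one> \<notin> U"
        moreover have "closedin T (topspace T - U)" using U closedin_diff[OF closedin_topspace] by blast
        moreover have "openin T (topspace T - U)" using U openin_diff[OF openin_topspace] by blast
        ultimately have "closedin T (topspace T - U) \<and> openin T (topspace T - U) \<and> \<one> \<in> topspace T - U \<and> x \<notin> topspace T - U"
          using xU top by blast
        then show False using nU by blast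
      qed
    qed
  qed
  let ?Q = "quasi_component_of_set T \<one>"
  have Qin: "?Q \<in> quasi_components_of T"
    by (simp add: quasi_component_in_quasi_components_of top)
  have "compactin T ?Q" using closedin_compact_space[OF cpt closedin_quasi_component_of] .
  then have "?Q \<in> connected_components_of T"
    using compact_quasi_eq_connected_components_of[OF compact_imp_locally_compact_space[OF cpt] haus] Qin
    by blast
  then have "connectedin T ?Q" using connectedin_connected_components_of by blast
  then obtain a where "?Q \<subseteq> {a}" using tdisc by blast
  moreover have "\<one> \<in> ?Q" using top by simp
  moreover have "x \<in> ?Q" using q by simp
  ultimately have "\<one> = a" "x = a" by blast+
  then show False using x by simp
qed

lemma open_subgroup_in:
  assumes U: "closedin T U" "openin T U" "\<one> \<in> U"
  shows "\<exists>V. subgroup V G \<and> openin T V \<and> V \<subseteq> U"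
proof -
  have Uc: "U \<subseteq> carrier G" using closedin_subset U top by auto
  let ?W0 = "{p \<in> topspace (prod_topology T T). (\<lambda>(x, y). x \<otimes> y) p \<in> U}"
  have W0: "openin (prod_topology T T) ?W0"
    using openin_continuous_map_preimage[OF multc U(2)] .
  have cU: "compactin T U" using closedin_compact_space[OF cpt U(1)] .
  have UW: "U \<times> {\<one>} \<subseteq> ?W0" using Uc top by auto
  have one_top: "\<one> \<in> topspace T" using top by simp
  obtain U1 V1 where UV: "openin T U1" "openin T V1" "U \<subseteq> U1" "\<one> \<in> V1" "U1 \<times> V1 \<subseteq> ?W0"
    using tube_lemma_left[OF W0 cU one_top UW] by blast
  have V1c: "V1 \<subseteq> carrier G" using openin_subset UV(2) top by auto
  have key: "u \<otimes> w \<in> U" if "u \<in> U" "w \<in> V1" for u w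
  proof -
    have "(u, w) \<in> ?W0" using UV(3,5) that by blast
    then show ?thesis by simp
  qed
  define W where "W = V1 \<inter> {w \<in> carrier G. inv w \<in> V1}"
  have Wo: "openin T W" unfolding W_def
    using openin_Int[OF UV(2) open_pre[OF invc UV(2)]] .
  have W1: "\<one> \<in> W" using UV(4) by (simp add: W_def)
  define V where "V = {g \<in> carrier G. \<forall>u\<in>U. u \<otimes> g \<in> U \<and> u \<otimes> inv g \<in> U}"
  have Vsub: "subgroup V G"
  proof (rule subgroup.intro)
    show "V \<subseteq> carrier G" by (auto simp: V_def)
    show "\<one> \<in> V" using Uc by (auto simp: V_def)
    fix g h assume g: "g \<in> V" and h: "h \<in> V"
    have gc: "g \<in> carrier G" and hc: "h \<in> carrier G" using g h by (auto simp: V_def)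
    show "g \<otimes> h \<in> V" unfolding V_def
    proof (intro CollectI conjI ballI)
      show "g \<otimes> h \<in> carrier G" using gc hc by simp
      fix u assume u: "u \<in> U"
      have uc: "u \<in> carrier G" using u Uc by auto
      have "u \<otimes> g \<in> U" using g u by (auto simp: V_def)
      then have "(u \<otimes> g) \<otimes> h \<in> U" using h by (auto simp: V_def)
      then show "u \<otimes> (g \<otimes> h) \<in> U" using uc gc hc by (simp add: m_assoc)
      have "u \<otimes> inv h \<in> U" using h u by (auto simp: V_def)
      then have "(u \<otimes> inv h) \<otimes> inv g \<in> U" using g by (auto simp: V_def)
      then show "u \<otimes> inv (g \<otimes> h) \<in> U" using uc gc hc by (simp add: m_assoc inv_mult_group)
    qed
  next
    fix g assume g: "g \<in> V"
    then show "inv g \<in> V" by (auto simp: V_def)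
  qed
  have VU: "V \<subseteq> U"
  proof
    fix g assume "g \<in> V"
    then have "\<one> \<otimes> g \<in> U" "g \<in> carrier G" using U(3) by (auto simp: V_def)
    then show "g \<in> U" by simp
  qed
  have Vo: "openin T V"
  proof (subst openin_subopen, intro ballI)
    fix g assume g: "g \<in> V"
    have gc: "g \<in> carrier G" using g by (auto simp: V_def)
    let ?O = "{y \<in> carrier G. inv g \<otimes> y \<in> W}"
    have "openin T ?O" using open_coset[OF Wo gc] .
    moreover have "g \<in> ?O" using gc W1 by simp
    moreover have "?O \<subseteq> V"
    proof
      fix y assume y: "y \<in> ?O"
      define w where "w = inv g \<otimes> y"
      have yc: "y \<in> carrier G" using y by simp
      have wW: "w \<in> V1" "inv w \<in> V1" using y by (auto simp: w_def W_def)
      have wc: "w \<in> carrier G" using yc gc by (simp add: w_def)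
      have yw: "y = g \<otimes> w" using gc yc by (simp add: w_def flip: m_assoc)
      show "y \<in> V" unfolding V_def
      proof (intro CollectI conjI ballI)
        show "y \<in> carrier G" by fact
        fix u assume u: "u \<in> U"
        have uc: "u \<in> carrier G" using u Uc by auto
        have "u \<otimes> g \<in> U" using g u by (auto simp: V_def)
        then have "(u \<otimes> g) \<otimes> w \<in> U" using key wW by blast
        then show "u \<otimes> y \<in> U" using uc gc wc yw by (simp add: m_assoc)
        have "u \<otimes> inv w \<in> U" using key wW u by blast
        then have "(u \<otimes> inv w) \<otimes> inv g \<in> U" using g by (auto simp: V_def)
        then show "u \<otimes> inv y \<in> U" using uc gc wc yw by (simp add: m_assoc inv_mult_group)
      qed
    qed
    ultimately show "\<exists>Ov. openin T Ov \<and> g \<in> Ov \<and> Ov \<subseteq> V" by blast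
  qed
  show ?thesis using Vsub Vo VU by blast
qed

lemma cancel0:
  assumes "x \<in> carrier G" "w \<in> carrier G"
  shows "x \<otimes> (inv x \<otimes> w) = w"
  using assms by (simp flip: m_assoc)

lemma cancel1:
  assumes "x \<in> carrier G" "y \<in> carrier G" "z \<in> carrier G"
  shows "inv (x \<otimes> y) \<otimes> (x \<otimes> z) = inv y \<otimes> z"
  using assms by (simp add: inv_mult m_assoc m_lcomm cancel0)

lemma cancel2:
  assumes "x \<in> carrier G" "y \<in> carrier G" "z \<in> carrier G"
  shows "(x \<otimes> y) \<otimes> (inv y \<otimes> z) = x \<otimes> z"
  using assms by (simp add: m_assoc flip: m_assoc[of y "inv y" z])

lemma cancel3:
  assumes "x \<in> carrier G" "y \<in> carrier G"
  shows "(x \<otimes> inv y) \<otimes> y = x"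
  using assms by (simp add: m_assoc)

lemma fip:
  assumes "\<And>C. C \<in> \<U> \<Longrightarrow> closedin T C"
    and "\<And>\<F>. finite \<F> \<Longrightarrow> \<F> \<subseteq> \<U> \<Longrightarrow> \<Inter>\<F> \<noteq> {}"
  shows "\<Inter>\<U> \<noteq> {}"
  using cpt assms unfolding compact_space_fip by blast

lemma chain_min:
  assumes "finite F" "F \<noteq> {}" "\<forall>A\<in>F. \<forall>B\<in>F. A \<subseteq> B \<or> B \<subseteq> A"
  shows "\<exists>K0\<in>F. \<forall>K\<in>F. K0 \<subseteq> K"
  using assms
proof (induction F rule: finite_ne_induct)
  case (singleton x)
  then show ?case by blast
next
  case (insert x F)
  then obtain K0 where K0: "K0 \<in> F" "\<forall>K\<in>F. K0 \<subseteq> K" by blast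
  have "x \<subseteq> K0 \<or> K0 \<subseteq> x" using insert.prems K0(1) by blast
  then show ?case
  proof
    assume "x \<subseteq> K0" then show ?thesis using K0 by blast
  next
    assume "K0 \<subseteq> x" then show ?thesis using K0 by blast
  qed
qed

lemma chain_inter_mult:
  assumes A: "closedin T A" and A1: "\<one> \<in> A"
    and KK: "\<forall>K\<in>\<K>. closedin T K \<and> A <#> K = carrier G"
    and ch: "\<forall>K1\<in>\<K>. \<forall>K2\<in>\<K>. K1 \<subseteq> K2 \<or> K2 \<subseteq> K1"
    and g: "g \<in> carrier G"
  shows "g \<in> A <#> (carrier G \<inter> \<Inter>\<K>)"
proof -
  define S where "S K = {k \<in> K. g \<otimes> inv k \<in> A}" for K
  have contf: "continuous_map T T (\<lambda>k. g \<otimes> inv k)"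
    by (rule cont_mult[OF cont_const[OF g] cont_inv[OF cont_id]])
  have Sclosed: "closedin T (S K)" if "K \<in> \<K>" for K
  proof -
    have "K \<subseteq> carrier G" using KK that closedin_subset top by metis
    then have "S K = K \<inter> {k \<in> carrier G. g \<otimes> inv k \<in> A}"
      by (auto simp: S_def)
    then show ?thesis using closedin_Int KK that closed_pre[OF contf A] by metis
  qed
  define S0 where "S0 = {k \<in> carrier G. g \<otimes> inv k \<in> A}"
  have S0c: "closedin T S0" unfolding S0_def by (rule closed_pre[OF contf A])
  let ?U = "insert S0 (S ` \<K>)"
  have "\<Inter>?U \<noteq> {}"
  proof (rule fip)
    fix C assume "C \<in> ?U" then show "closedin T C"
      using Sclosed S0c by blast
  next
    fix F assume F: "finite F" "F \<subseteq> ?U"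
    then have "F - {S0} \<subseteq> S ` \<K>" "finite (F - {S0})" by auto
    then obtain KF where KF: "KF \<subseteq> \<K>" "finite KF" "F - {S0} = S ` KF"
      using finite_subset_image by metis
    show "\<Inter>F \<noteq> {}"
    proof (cases "KF = {}")
      case True
      then have "F \<subseteq> {S0}" using KF by auto
      moreover have "g \<in> S0" using g A1 by (simp add: S0_def)
      ultimately have "g \<in> \<Inter>F" by auto
      then show ?thesis by blast
    next
      case False
      then obtain K0 where K0: "K0 \<in> KF" "\<forall>K\<in>KF. K0 \<subseteq> K"
        using chain_min[OF KF(2) False] ch KF(1) by (meson subsetD)
      have "g \<in> A <#> K0" using KK K0(1) KF(1) g by auto
      then obtain a k where ak: "a \<in> A" "k \<in> K0" "g = a \<otimes> k" by (auto simp: set_mult_iff)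
      have Ac: "A \<subseteq> carrier G" using A closedin_subset top by auto
      have K0c: "K0 \<subseteq> carrier G" using KK K0(1) KF(1) closedin_subset top by blast
      have ac: "a \<in> carrier G" "k \<in> carrier G" using ak Ac K0c by auto
      have "g \<otimes> inv k = a" using ak(3) ac by (simp add: m_assoc)
      then have "k \<in> S K" if "K \<in> KF" for K
        using K0(2) that ak by (auto simp: S_def)
      moreover have "k \<in> S0" using ac \<open>g \<otimes> inv k = a\<close> ak by (simp add: S0_def)
      ultimately have "k \<in> \<Inter>F" using KF(3) by blast
      then show ?thesis by blast
    qed
  qed
  then obtain k where k: "k \<in> \<Inter>?U" by blast
  then have kc: "k \<in> carrier G" and kK: "\<forall>K\<in>\<K>. k \<in> K" and kA: "g \<otimes> inv k \<in> A"
    by (auto simp: S_def S0_def)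
  have "g = (g \<otimes> inv k) \<otimes> k" using g kc by (simp add: cancel3)
  with kA show ?thesis using kc kK by (auto simp: set_mult_iff)
qed

lemma min_complement:
  assumes A: "closedin T A" "subgroup A G"
  shows "\<exists>K. closedin T K \<and> subgroup K G \<and> A <#> K = carrier G \<and>
     (\<forall>K'. closedin T K' \<and> subgroup K' G \<and> A <#> K' = carrier G \<and> K' \<subseteq> K \<longrightarrow> K' = K)"
proof -
  have Ac: "A \<subseteq> carrier G" using A(2) subgroup.subset by blast
  define SSS where "SSS = {K. closedin T K \<and> subgroup K G \<and> A <#> K = carrier G}"
  define CC where "CC = (\<lambda>K. carrier G - K) ` SSS"
  have Sc: "K \<subseteq> carrier G" if "K \<in> SSS" for K
    using that subgroup.subset by (auto simp: SSS_def)
  have "\<exists>Mx\<in>CC. \<forall>Xa\<in>CC. Mx \<subseteq> Xa \<longrightarrow> Xa = Mx"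
  proof (rule Zorn_Lemma2, intro ballI)
    fix C assume "C \<in> chains CC"
    then have C: "C \<subseteq> CC" "\<forall>Xa\<in>C. \<forall>Ya\<in>C. Xa \<subseteq> Ya \<or> Ya \<subseteq> Xa"
      by (auto simp: chains_def chain_subset_def)
    define \<K> where "\<K> = (\<lambda>Xa. carrier G - Xa) ` C"
    have Ksub: "\<K> \<subseteq> SSS"
    proof
      fix K assume "K \<in> \<K>"
      then obtain Xa where Xa: "Xa \<in> C" "K = carrier G - Xa" by (auto simp: \<K>_def)
      then obtain K1 where K1: "K1 \<in> SSS" "Xa = carrier G - K1" using C(1) by (auto simp: CC_def)
      then have "K = K1" using Xa Sc[OF K1(1)] by auto
      then show "K \<in> SSS" using K1 by simp
    qed
    have Kch: "\<forall>K1\<in>\<K>. \<forall>K2\<in>\<K>. K1 \<subseteq> K2 \<or> K2 \<subseteq> K1"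
      using C(2) unfolding \<K>_def by blast
    define K0 where "K0 = carrier G \<inter> \<Inter>\<K>"
    have K0eq: "K0 = \<Inter>(insert (carrier G) \<K>)" by (simp add: K0_def)
    have K0cl: "closedin T K0" unfolding K0eq
    proof (rule closedin_Inter)
      show "insert (carrier G) \<K> \<noteq> {}" by simp
      fix S assume "S \<in> insert (carrier G) \<K>"
      then consider "S = carrier G" | "S \<in> \<K>" by blast
      then show "closedin T S"
      proof cases
        case 1 then show ?thesis using closedin_topspace[of T] unfolding top by simp
      next
        case 2 then show ?thesis using Ksub by (auto simp: SSS_def)
      qed
    qed
    have K0sg: "subgroup K0 G" unfolding K0eq
      using Ksub by (intro subgroups_Inter) (auto simp: SSS_def subgroup_self)
    have K0m: "A <#> K0 = carrier G"
    proof
      show "A <#> K0 \<subseteq> carrier G" using Ac by (intro setmult_subset_G) (auto simp: K0_def)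
      show "carrier G \<subseteq> A <#> K0"
      proof
        fix g assume "g \<in> carrier G"
        then show "g \<in> A <#> K0" unfolding K0_def
          using chain_inter_mult[OF A(1) subgroup.one_closed[OF A(2)] _ Kch] Ksub
          by (auto simp: SSS_def)
      qed
    qed
    have "K0 \<in> SSS" using K0cl K0sg K0m by (simp add: SSS_def)
    then have "carrier G - K0 \<in> CC" by (simp add: CC_def)
    moreover have "\<forall>Xa\<in>C. Xa \<subseteq> carrier G - K0"
    proof (intro ballI subsetI)
      fix Xa x assume Xa: "Xa \<in> C" and x: "x \<in> Xa"
      have "Xa \<subseteq> carrier G" using Xa C(1) by (auto simp: CC_def)
      then have "x \<in> carrier G" using x by blast
      moreover have "carrier G - Xa \<in> \<K>" using Xa by (simp add: \<K>_def)
      ultimately show "x \<in> carrier G - K0" using x by (auto simp: K0_def)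
    qed
    ultimately show "\<exists>U\<in>CC. \<forall>Xa\<in>C. Xa \<subseteq> U" by blast
  qed
  then obtain Mx where Mx: "Mx \<in> CC" "\<forall>Xa\<in>CC. Mx \<subseteq> Xa \<longrightarrow> Xa = Mx" by blast
  then obtain K where K: "K \<in> SSS" "Mx = carrier G - K" by (auto simp: CC_def)
  have "\<forall>K'. closedin T K' \<and> subgroup K' G \<and> A <#> K' = carrier G \<and> K' \<subseteq> K \<longrightarrow> K' = K"
  proof (intro allI impI)
    fix K' assume K': "closedin T K' \<and> subgroup K' G \<and> A <#> K' = carrier G \<and> K' \<subseteq> K"
    then have "K' \<in> SSS" by (simp add: SSS_def)
    then have "carrier G - K' \<in> CC" by (simp add: CC_def)
    moreover have "Mx \<subseteq> carrier G - K'" using K(2) K' by auto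
    ultimately have "carrier G - K' = carrier G - K" using Mx(2) K(2) by blast
    then show "K' = K" using Sc[OF K(1)] Sc[OF \<open>K' \<in> SSS\<close>] by blast
  qed
  then show ?thesis using K(1) by (auto simp: SSS_def)
qed

lemma back_dir:
  assumes icp: "internal_cartesian_product G T I H"
    and pr: "\<forall>i\<in>I. Factorial_Ring.prime (card (H i))"
  shows "profinite_C_group G T"
  unfolding profinite_C_group_def
proof (intro conjI allI impI)
  show "profinite_group G T" by (rule prof)
  fix A assume A: "subgroup A G \<and> closedin T A"
  then have Asg: "subgroup A G" and Acl: "closedin T A" by auto
  have Ac: "A \<subseteq> carrier G" using Asg subgroup.subset by blast
  obtain K where K: "closedin T K" "subgroup K G" "A <#> K = carrier G"
    and Kmin: "\<forall>K'. closedin T K' \<and> subgroup K' G \<and> A <#> K' = carrier G \<and> K' \<subseteq> K \<longrightarrow> K' = K"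
    using min_complement[OF Acl Asg] by blast
  have Kc: "K \<subseteq> carrier G" using K(2) subgroup.subset by blast
  note icp' = icp[unfolded internal_cartesian_product_def]
  have icp1: "\<forall>i\<in>I. closedin T (H i) \<and> H i \<lhd> G" using icp'[THEN conjunct1] .
  have icp2: "T closure_of (generate G (\<Union>i\<in>I. H i)) = carrier G"
    using icp'[THEN conjunct2, THEN conjunct1] .
  have icp3: "carrier G \<inter> (\<Inter>i\<in>I. T closure_of (generate G (\<Union>j\<in>I - {i}. H j))) = {\<one>}"
    using icp'[THEN conjunct2, THEN conjunct2] .
  have Hsg: "subgroup (H i) G" if "i \<in> I" for i
    using icp1 that normal_imp_subgroup by blast
  have Hcl: "closedin T (H i)" if "i \<in> I" for i
    using icp1 that by blast
  have Hc: "H i \<subseteq> carrier G" if "i \<in> I" for i using Hsg[OF that] subgroup.subset by blast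
  have Hfin: "finite (H i)" if "i \<in> I" for i using pr that by (metis card.infinite not_prime_0)
  define N where "N i = T closure_of generate G (\<Union>j\<in>I - {i}. H j)" for i
  have Ncl: "closedin T (N i)" for i by (simp add: N_def)
  have Nsg: "subgroup (N i) G" for i
    unfolding N_def using Hc by (intro closure_subgroup generate_is_subgroup) blast
  have Nc: "N i \<subseteq> carrier G" for i using Nsg subgroup.subset by blast
  have HN: "carrier G \<subseteq> H i <#> N i" if i: "i \<in> I" for i
  proof -
    have Psg: "subgroup (H i <#> N i) G" using mult_subgroups[OF Hsg[OF i] Nsg] .
    have Pcl: "closedin T (H i <#> N i)" using closed_finite_mult[OF Hfin[OF i] Hc[OF i] Ncl] .
    have "(\<Union>j\<in>I. H j) \<subseteq> H i <#> N i"
    proof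
      fix x assume "x \<in> (\<Union>j\<in>I. H j)"
      then obtain j where j: "j \<in> I" "x \<in> H j" by blast
      have xc: "x \<in> carrier G" using j Hc by blast
      show "x \<in> H i <#> N i"
      proof (cases "j = i")
        case True
        then have "x = x \<otimes> \<one>" "\<one> \<in> N i" using xc subgroup.one_closed[OF Nsg] by auto
        then show ?thesis using j True by (auto simp: set_mult_iff)
      next
        case False
        have "x \<in> (\<Union>j\<in>I - {i}. H j)" using j False by blast
        then have "x \<in> generate G (\<Union>j\<in>I - {i}. H j)" by (rule generate.incl)
        moreover have "generate G (\<Union>j\<in>I - {i}. H j) \<subseteq> carrier G"
          using generate_is_subgroup[of "\<Union>j\<in>I - {i}. H j"] Hc subgroup.subset by blast
        ultimately have "x \<in> N i" unfolding N_def
          using closure_of_subset[of "generate G (\<Union>j\<in>I - {i}. H j)" T] unfolding top by blast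
        moreover have "x = \<one> \<otimes> x" "\<one> \<in> H i" using xc subgroup.one_closed[OF Hsg[OF i]] by auto
        ultimately show ?thesis by (auto simp: set_mult_iff)
      qed
    qed
    then have "generate G (\<Union>j\<in>I. H j) \<subseteq> H i <#> N i"
      by (rule generate_subgroup_incl[OF _ Psg])
    then have "T closure_of generate G (\<Union>j\<in>I. H j) \<subseteq> H i <#> N i"
      by (rule closure_of_minimal[OF _ Pcl])
    then show ?thesis using icp2 by simp
  qed
  have AK: "A \<inter> K = {\<one>}"
  proof (rule ccontr)
    assume "A \<inter> K \<noteq> {\<one>}"
    moreover have "\<one> \<in> A \<inter> K" using subgroup.one_closed Asg K(2) by blast
    ultimately obtain a where a: "a \<in> A" "a \<in> K" "a \<noteq> \<one>" by blast
    have ac: "a \<in> carrier G" using a Ac by blast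
    have "a \<notin> carrier G \<inter> (\<Inter>i\<in>I. N i)"
    proof
      assume "a \<in> carrier G \<inter> (\<Inter>i\<in>I. N i)"
      then have "a \<in> {\<one>}" using icp3 unfolding N_def by simp
      then show False using a(3) by simp
    qed
    then obtain i where i: "i \<in> I" "a \<notin> N i" using ac by blast
    have "a \<in> H i <#> N i" using HN[OF i(1)] ac by blast
    then obtain h n where hn: "h \<in> H i" "n \<in> N i" "a = h \<otimes> n" unfolding set_mult_iff by blast
    have hc: "h \<in> carrier G" "n \<in> carrier G" using hn Hc[OF i(1)] Nc by auto
    have h1: "h \<noteq> \<one>" using hn i(2) hc by auto
    define K' where "K' = K \<inter> N i"
    have K'cl: "closedin T K'" using K(1) Ncl by (simp add: K'_def closedin_Int)
    have K'sg: "subgroup K' G" unfolding K'_def by (rule subgroups_Inter_pair[OF K(2) Nsg])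
    have K'm: "A <#> K' = carrier G"
    proof
      show "A <#> K' \<subseteq> carrier G" using Ac Kc by (intro setmult_subset_G) (auto simp: K'_def)
      show "carrier G \<subseteq> A <#> K'"
      proof
        fix g assume g: "g \<in> carrier G"
        then have "g \<in> A <#> K" using K(3) by simp
        then obtain a0 k where ak: "a0 \<in> A" "k \<in> K" "g = a0 \<otimes> k" unfolding set_mult_iff by blast
        have a0c: "a0 \<in> carrier G" "k \<in> carrier G" using ak Ac Kc by auto
        have "k \<in> H i <#> N i" using HN[OF i(1)] a0c(2) by blast
        then obtain h' n' where hn': "h' \<in> H i" "n' \<in> N i" "k = h' \<otimes> n'"
          unfolding set_mult_iff by blast
        have hc': "h' \<in> carrier G" "n' \<in> carrier G" using hn' Hc[OF i(1)] Nc by auto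
        obtain j :: int where j: "h' = h [^] j"
          using prime_order_pow[OF Hsg[OF i(1)] _ hn(1) h1 hn'(1)] pr i(1) by blast
        define k' where "k' = inv (a [^] j) \<otimes> k"
        have "a [^] j \<in> K" using subgroup_int_pow_closed[OF K(2) a(2)] .
        then have k'K: "k' \<in> K" unfolding k'_def using K(2) ak(2)
          by (simp add: subgroup.m_closed subgroup.m_inv_closed)
        have "a [^] j = h [^] j \<otimes> n [^] j" using hn(3) hc by (simp add: int_pow_distrib)
        then have "k' = inv (n [^] j) \<otimes> n'"
          unfolding k'_def using hn'(3) j hc hc' by (simp add: cancel1)
        moreover have "n [^] j \<in> N i" using subgroup_int_pow_closed[OF Nsg hn(2)] .
        ultimately have k'N: "k' \<in> N i" using Nsg hn'(2)
          by (simp add: subgroup.m_closed subgroup.m_inv_closed)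
        have "a0 \<otimes> a [^] j \<in> A" using Asg ak(1) subgroup_int_pow_closed[OF Asg a(1)]
          by (simp add: subgroup.m_closed)
        moreover have "g = (a0 \<otimes> a [^] j) \<otimes> k'"
          unfolding k'_def using ak(3) a0c ac by (simp add: cancel2)
        ultimately show "g \<in> A <#> K'" using k'K k'N by (auto simp: set_mult_iff K'_def)
      qed
    qed
    have "K' \<subseteq> K" by (auto simp: K'_def)
    then have "K' = K" using Kmin K'cl K'sg K'm by blast
    then show False using a(2) i(2) by (auto simp: K'_def)
  qed
  have "permutable_complement G A K"
    unfolding permutable_complement_def using K AK by simp
  then show "\<exists>K. closedin T K \<and> permutable_complement G A K" using K(1) by blast
qed

definition msub :: "'a set \<Rightarrow> bool" where
  "msub M \<longleftrightarrow> closedin T M \<and> subgroup M G \<and>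
     (\<exists>Z. subgroup Z G \<and> Factorial_Ring.prime (card Z) \<and> Z \<inter> M = {\<one>}) \<and>
     (\<forall>N. subgroup N G \<longrightarrow> \<not> N \<subseteq> M \<longrightarrow> carrier G \<subseteq> N <#> M)"

lemma inv_eq_one_imp:
  assumes "a \<in> carrier G" "b \<in> carrier G" "a \<otimes> inv b = \<one>"
  shows "a = b"
  using assms cancel3[of a b] by simp

lemma union_chain_subgroup:
  assumes "C \<noteq> {}" "\<forall>N\<in>C. subgroup N G" "\<forall>N1\<in>C. \<forall>N2\<in>C. N1 \<subseteq> N2 \<or> N2 \<subseteq> N1"
  shows "subgroup (\<Union>C) G"
proof -
  have sg: "subgroup N G" if "N \<in> C" for N using assms(2) that by blast
  have sub: "\<Union>C \<subseteq> carrier G"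
  proof
    fix x assume "x \<in> \<Union>C"
    then obtain N where "N \<in> C" "x \<in> N" by (rule UnionE)
    then show "x \<in> carrier G" using subgroup.subset[OF sg] by blast
  qed
  obtain N0 where N0: "N0 \<in> C" using assms(1) by blast
  have one: "\<one> \<in> \<Union>C" using subgroup.one_closed[OF sg[OF N0]] N0 by (rule UnionI[rotated])
  have mc: "x \<otimes> y \<in> \<Union>C" if x: "x \<in> \<Union>C" and y: "y \<in> \<Union>C" for x y
  proof -
    obtain N1 where N1: "x \<in> N1" "N1 \<in> C" using x by (rule UnionE)
    obtain N2 where N2: "y \<in> N2" "N2 \<in> C" using y by (rule UnionE)
    have "N1 \<subseteq> N2 \<or> N2 \<subseteq> N1" using assms(3) N1(2) N2(2) by blast
    then show ?thesis
    proof
      assume "N1 \<subseteq> N2"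
      then have "x \<in> N2" using N1(1) by (rule subsetD)
      then have "x \<otimes> y \<in> N2" using subgroup.m_closed[OF sg[OF N2(2)]] N2(1) by simp
      then show ?thesis using N2(2) by (rule UnionI[rotated])
    next
      assume "N2 \<subseteq> N1"
      then have "y \<in> N1" using N2(1) by (rule subsetD)
      then have "x \<otimes> y \<in> N1" using subgroup.m_closed[OF sg[OF N1(2)]] N1(1) by simp
      then show ?thesis using N1(2) by (rule UnionI[rotated])
    qed
  qed
  have ic: "inv x \<in> \<Union>C" if x: "x \<in> \<Union>C" for x
  proof -
    obtain N1 where N1: "x \<in> N1" "N1 \<in> C" using x by (rule UnionE)
    have "inv x \<in> N1" using subgroup.m_inv_closed[OF sg[OF N1(2)] N1(1)] .
    then show ?thesis using N1(2) by (rule UnionI[rotated])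
  qed
  show ?thesis
  proof (rule subgroup.intro)
    show "\<Union>C \<subseteq> carrier G" by (rule sub)
    show "\<one> \<in> \<Union>C" by (rule one)
    fix x y assume "x \<in> \<Union>C" "y \<in> \<Union>C"
    then show "x \<otimes> y \<in> \<Union>C" by (rule mc)
  next
    fix x assume "x \<in> \<Union>C"
    then show "inv x \<in> \<Union>C" by (rule ic)
  qed
qed

lemma open_subgroup_super_closed:
  assumes V: "subgroup V G" "openin T V" and M: "subgroup M G" "V \<subseteq> M"
  shows "closedin T M"
proof -
  have Mc: "M \<subseteq> carrier G" using M subgroup.subset by blast
  have "openin T (carrier G - M)"
  proof (subst openin_subopen, intro ballI)
    fix y assume y: "y \<in> carrier G - M"
    let ?O = "{z \<in> carrier G. inv y \<otimes> z \<in> V}"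
    have yc: "y \<in> carrier G" using y by blast
    have "openin T ?O" by (rule open_coset[OF V(2) yc])
    moreover have "y \<in> ?O" using y subgroup.one_closed[OF V(1)] by simp
    moreover have "?O \<subseteq> carrier G - M"
    proof
      fix z assume z: "z \<in> ?O"
      have zc: "z \<in> carrier G" "y \<in> carrier G" using z y by auto
      show "z \<in> carrier G - M"
      proof (rule ccontr)
        assume "z \<notin> carrier G - M"
        then have zM: "z \<in> M" using zc by blast
        have "inv y \<otimes> z \<in> M" using z M(2) by blast
        then have "inv (inv y \<otimes> z) \<in> M" by (rule subgroup.m_inv_closed[OF M(1)])
        then have "z \<otimes> inv (inv y \<otimes> z) \<in> M" by (rule subgroup.m_closed[OF M(1) zM])
        moreover have "z \<otimes> inv (inv y \<otimes> z) = y" using zc by (simp add: inv_mult m_assoc m_lcomm cancel0)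
        ultimately show False using y by simp
      qed
    qed
    ultimately show "\<exists>Ov. openin T Ov \<and> y \<in> Ov \<and> Ov \<subseteq> carrier G - M" by blast
  qed
  then show ?thesis using Mc by (simp add: closedin_def top)
qed

lemma cancel4:
  assumes "x \<in> carrier G" "y \<in> carrier G"
  shows "(x \<otimes> y) \<otimes> inv y = x"
  using assms by (simp add: m_assoc)

lemma sg_mult: "subgroup S G \<Longrightarrow> a \<in> S \<Longrightarrow> b \<in> S \<Longrightarrow> a \<otimes> b \<in> S"
  by (rule subgroup.m_closed)
lemma sg_inv: "subgroup S G \<Longrightarrow> a \<in> S \<Longrightarrow> inv a \<in> S"
  by (rule subgroup.m_inv_closed)
lemma sg_one: "subgroup S G \<Longrightarrow> \<one> \<in> S"
  by (rule subgroup.one_closed)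
lemma sg_sub: "subgroup S G \<Longrightarrow> a \<in> S \<Longrightarrow> a \<in> carrier G"
  using subgroup.subset by blast

lemma exists_msub:
  assumes Cg: "profinite_C_group G T" and x: "x \<in> carrier G" "x \<noteq> \<one>"
  shows "\<exists>M. msub M \<and> x \<notin> M"
proof -
  have Cp: "\<exists>K. closedin T K \<and> permutable_complement G A K" if "subgroup A G" "closedin T A" for A
    using Cg that unfolding profinite_C_group_def by blast
  obtain U where U: "closedin T U" "openin T U" "\<one> \<in> U" "x \<notin> U" using clopen_sep[OF x] by blast
  obtain V where V: "subgroup V G" "openin T V" "V \<subseteq> U" using open_subgroup_in[OF U(1-3)] by blast
  have xV: "x \<notin> V" using V U by blast
  define AA where "AA = {N. subgroup N G \<and> V \<subseteq> N \<and> x \<notin> N}"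
  have "\<exists>M\<in>AA. \<forall>N\<in>AA. M \<subseteq> N \<longrightarrow> N = M"
  proof (rule Zorn_Lemma2, intro ballI)
    fix C assume "C \<in> chains AA"
    then have C: "C \<subseteq> AA" "\<forall>N1\<in>C. \<forall>N2\<in>C. N1 \<subseteq> N2 \<or> N2 \<subseteq> N1"
      by (auto simp: chains_def chain_subset_def)
    show "\<exists>Ub\<in>AA. \<forall>N\<in>C. N \<subseteq> Ub"
    proof (cases "C = {}")
      case True
      have "V \<in> AA" using V xV by (simp add: AA_def)
      then show ?thesis using True by blast
    next
      case False
      have "\<forall>N\<in>C. subgroup N G" using C(1) by (auto simp: AA_def)
      then have "subgroup (\<Union>C) G" using union_chain_subgroup[OF False _ C(2)] by blast
      moreover have "V \<subseteq> \<Union>C" using False C(1) by (auto simp: AA_def)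
      moreover have "x \<notin> \<Union>C" using C(1) by (auto simp: AA_def)
      ultimately have "\<Union>C \<in> AA" by (simp add: AA_def)
      then show ?thesis by blast
    qed
  qed
  then obtain M where M: "M \<in> AA" and Mmax: "\<forall>N\<in>AA. M \<subseteq> N \<longrightarrow> N = M" by blast
  have Msg: "subgroup M G" and VM: "V \<subseteq> M" and xM: "x \<notin> M" using M by (auto simp: AA_def)
  have Mc: "M \<subseteq> carrier G" using Msg subgroup.subset by blast
  have Mcl: "closedin T M" using open_subgroup_super_closed[OF V(1,2) Msg VM] .
  have MX: "\<exists>m\<in>M. \<exists>k::int. x = m \<otimes> w [^] k" if w: "w \<in> carrier G" "w \<notin> M" for w
  proof (rule ccontr)
    assume nx: "\<not> ?thesis"
    define Sw where "Sw = {m \<otimes> w [^] (k::int) | m k. m \<in> M}"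
    have Swsg: "subgroup Sw G"
    proof (rule subgroup.intro)
      show "Sw \<subseteq> carrier G" using Mc w by (auto simp: Sw_def)
      have "\<one> = \<one> \<otimes> w [^] (0::int)" by simp
      then show "\<one> \<in> Sw" unfolding Sw_def using sg_one[OF Msg] by blast
      fix a b assume a: "a \<in> Sw" and b: "b \<in> Sw"
      then obtain m1 k1 m2 k2 where mk: "m1 \<in> M" "a = m1 \<otimes> w [^] (k1::int)" "m2 \<in> M" "b = m2 \<otimes> w [^] (k2::int)"
        unfolding Sw_def by blast
      have m12: "m1 \<in> carrier G" "m2 \<in> carrier G" using mk(1,3) Mc by auto
      have "a \<otimes> b = (m1 \<otimes> m2) \<otimes> w [^] (k1 + k2)"
        using mk(2,4) m12 w(1) by (simp add: int_pow_mult m_ac)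
      moreover have "m1 \<otimes> m2 \<in> M" using sg_mult[OF Msg mk(1,3)] .
      ultimately show "a \<otimes> b \<in> Sw" unfolding Sw_def by blast
    next
      fix a assume a: "a \<in> Sw"
      then obtain m1 k1 where mk: "m1 \<in> M" "a = m1 \<otimes> w [^] (k1::int)"
        unfolding Sw_def by blast
      have m1c: "m1 \<in> carrier G" using mk(1) Mc by auto
      have "inv a = inv m1 \<otimes> w [^] (- k1)"
        using mk(2) m1c w(1) by (simp add: inv_mult int_pow_neg)
      moreover have "inv m1 \<in> M" using sg_inv[OF Msg mk(1)] .
      ultimately show "inv a \<in> Sw" unfolding Sw_def by blast
    qed
    have MSw: "M \<subseteq> Sw"
    proof
      fix m assume mM: "m \<in> M"
      moreover have "m = m \<otimes> w [^] (0::int)" using mM Mc by auto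
      ultimately show "m \<in> Sw" unfolding Sw_def by blast
    qed
    have "w = \<one> \<otimes> w [^] (1::int)" using w by simp
    then have wSw: "w \<in> Sw" unfolding Sw_def using sg_one[OF Msg] by blast
    have "x \<notin> Sw" using nx unfolding Sw_def by blast
    then have "Sw \<in> AA" using Swsg MSw VM by (auto simp: AA_def)
    then have "Sw = M" using Mmax MSw by blast
    then show False using wSw w by blast
  qed
  obtain Z where Zcl: "closedin T Z" and Zpc: "permutable_complement G M Z" using Cp[OF Msg Mcl] by blast
  have Zsg: "subgroup Z G" and MZ: "M <#> Z = carrier G" and MZ1: "M \<inter> Z = {\<one>}"
    using Zpc unfolding permutable_complement_def by auto
  have Zc: "Z \<subseteq> carrier G" using Zsg subgroup.subset by blast
  have "x \<in> M <#> Z" using MZ x by simp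
  then obtain m0 zx where mz: "m0 \<in> M" "zx \<in> Z" "x = m0 \<otimes> zx" unfolding set_mult_iff by blast
  have m0c: "m0 \<in> carrier G" "zx \<in> carrier G" using mz Mc Zc by auto
  have zxM: "zx \<notin> M"
  proof
    assume "zx \<in> M"
    then have "x \<in> M" using sg_mult[OF Msg mz(1)] mz(3) by simp
    then show False using xM by simp
  qed
  have zx1: "zx \<noteq> \<one>" using zxM sg_one[OF Msg] by blast
  have STAR: "\<exists>k::int. zx = w [^] k" if w: "w \<in> Z" "w \<noteq> \<one>" for w
  proof -
    have wc: "w \<in> carrier G" using w Zc by blast
    have wM: "w \<notin> M" using w MZ1 by blast
    obtain m k where mk: "m \<in> M" "x = m \<otimes> w [^] (k::int)" using MX[OF wc wM] by blast
    have mc: "m \<in> carrier G" using mk Mc by blast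
    define d where "d = zx \<otimes> inv (w [^] k)"
    have dZ: "d \<in> Z" unfolding d_def
      using sg_mult[OF Zsg mz(2) sg_inv[OF Zsg subgroup_int_pow_closed[OF Zsg w(1)]]] .
    have dc: "d \<in> carrier G" using dZ Zc by blast
    have "m0 \<otimes> d = m"
    proof -
      have "m0 \<otimes> d = (m0 \<otimes> zx) \<otimes> inv (w [^] k)" unfolding d_def using m0c wc by (simp add: m_assoc)
      also have "\<dots> = (m \<otimes> w [^] k) \<otimes> inv (w [^] k)" using mz(3) mk(2) by simp
      also have "\<dots> = m" using mc wc by (simp add: cancel4)
      finally show ?thesis .
    qed
    then have "inv m0 \<otimes> (m0 \<otimes> d) = inv m0 \<otimes> m" by simp
    then have "d = inv m0 \<otimes> m" using m0c dc by (simp flip: m_assoc)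
    then have "d \<in> M" using sg_mult[OF Msg sg_inv[OF Msg mz(1)] mk(1)] by simp
    then have "d = \<one>" using dZ MZ1 by blast
    then have "zx = w [^] k" using inv_eq_one_imp[of zx "w [^] k"] m0c wc unfolding d_def by simp
    then show ?thesis by blast
  qed
  have ordnz: "ord zx \<noteq> 0"
  proof (cases "zx [^] (2::int) = \<one>")
    case True
    then have d2: "int (ord zx) dvd 2" using int_pow_eq_id m0c(2) by blast
    show ?thesis
    proof
      assume "ord zx = 0"
      with d2 show False by simp
    qed
  next
    case False
    have "zx [^] (2::int) \<in> Z" using subgroup_int_pow_closed[OF Zsg mz(2)] .
    then obtain k :: int where k: "zx = (zx [^] (2::int)) [^] k" using STAR False by blast
    have e: "(zx [^] (2::int)) [^] k = zx [^] (2 * k)" using m0c(2) by (simp add: int_pow_pow)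
    have "zx [^] (1::int) = zx" using m0c(2) by simp
    also note k
    also note e
    finally have "zx [^] (1::int) = zx [^] (2 * k)" .
    then have "int (ord zx) dvd (2 * k - 1)" using int_pow_eq[OF m0c(2)] by blast
    moreover have "2 * k - 1 \<noteq> 0" by presburger
    ultimately show ?thesis by (metis dvd_0_left_iff of_nat_0)
  qed
  define m where "m = ord zx"
  have m1: "m \<noteq> 1" using zx1 ord_eq_1 m0c(2) by (simp add: m_def)
  obtain p where p: "Factorial_Ring.prime p" "p dvd m" using prime_factor_nat[OF m1] by blast
  have p0: "p > 0" using p(1) prime_gt_0_nat by blast
  have p1: "p > 1" using p(1) prime_gt_1_nat by blast
  have m0: "m > 0" using ordnz by (simp add: m_def)
  define w where "w = zx [^] (int (m div p))"
  have wZ: "w \<in> Z" unfolding w_def using subgroup_int_pow_closed[OF Zsg mz(2)] .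
  have w1: "w \<noteq> \<one>"
  proof
    assume "w = \<one>"
    then have "int m dvd int (m div p)" using int_pow_eq_id m0c(2) unfolding w_def m_def by blast
    then have d: "m dvd m div p" by simp
    have "m div p > 0" using p(2) m0 p0 by (metis dvd_div_eq_0_iff gr0I)
    moreover have "m div p < m" using p1 m0 by (simp add: div_less_dividend)
    ultimately show False using d dvd_imp_le by fastforce
  qed
  obtain k :: int where k: "zx = w [^] k" using STAR[OF wZ w1] by blast
  have wc: "w \<in> carrier G" using wZ Zc by blast
  have wp: "w [^] (int p) = \<one>"
  proof -
    have "w [^] (int p) = zx [^] (int (m div p) * int p)" unfolding w_def using m0c(2) by (simp add: int_pow_pow)
    also have "int (m div p) * int p = int m" using p(2) by (metis dvd_div_mult_self of_nat_mult)
    also have "zx [^] (int m) = \<one>" using m0c(2) by (simp add: m_def int_pow_int)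
    finally show ?thesis .
  qed
  have "zx [^] (int p) = w [^] (k * int p)" using k wc by (simp add: int_pow_pow)
  also have "\<dots> = (w [^] (int p)) [^] k" using wc by (simp add: int_pow_pow mult.commute)
  also have "\<dots> = \<one>" using wp by simp
  finally have "zx [^] (int p) = \<one>" .
  then have "int m dvd int p" using int_pow_eq_id m0c(2) unfolding m_def by blast
  then have "m dvd p" by simp
  then have mp: "m = p" using p(1) m1 unfolding prime_nat_iff by blast
  define Xg where "Xg = generate G {zx}"
  have Xsg: "subgroup Xg G" unfolding Xg_def using generate_is_subgroup m0c(2) by simp
  have Xcard: "card Xg = p" unfolding Xg_def using generate_pow_card[OF m0c(2)] mp m_def by simp
  have Xfin: "finite Xg" using Xcard p0 by (intro card_ge_0_finite) simp
  have Xc: "Xg \<subseteq> carrier G" using Xsg subgroup.subset by blast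
  have XZ: "Xg \<subseteq> Z" unfolding Xg_def using generate_subgroup_incl[OF _ Zsg] mz(2) by blast
  have zxX: "zx \<in> Xg" unfolding Xg_def by (rule generate.incl) simp
  obtain Y where Ycl: "closedin T Y" and Ypc: "permutable_complement G Xg Y"
    using Cp[OF Xsg finite_closed[OF Xfin Xc]] by blast
  have Ysg: "subgroup Y G" and XY: "Xg <#> Y = carrier G" and XY1: "Xg \<inter> Y = {\<one>}"
    using Ypc unfolding permutable_complement_def by auto
  have ZY: "w' = \<one>" if w': "w' \<in> Z" "w' \<in> Y" for w'
  proof (rule ccontr)
    assume "w' \<noteq> \<one>"
    then obtain k :: int where "zx = w' [^] k" using STAR w' by blast
    then have "zx \<in> Y" using subgroup_int_pow_closed[OF Ysg w'(2)] by simp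
    then have "zx = \<one>" using zxX XY1 by blast
    then show False using zx1 by simp
  qed
  have ZX: "Z \<subseteq> Xg"
  proof
    fix z assume z: "z \<in> Z"
    then have "z \<in> Xg <#> Y" using XY Zc by blast
    then obtain x' y where xy: "x' \<in> Xg" "y \<in> Y" "z = x' \<otimes> y" unfolding set_mult_iff by blast
    have xyc: "x' \<in> carrier G" "y \<in> carrier G" using xy(1) Xc sg_sub[OF Ysg xy(2)] by auto
    have "y = inv x' \<otimes> z" using xy(3) xyc by (simp add: cancel0 flip: m_assoc)
    moreover have "x' \<in> Z" using XZ xy(1) by blast
    then have "inv x' \<otimes> z \<in> Z" using sg_mult[OF Zsg sg_inv[OF Zsg] z] by blast
    ultimately have "y \<in> Z" by simp
    then have "y = \<one>" using ZY xy(2) by blast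
    then show "z \<in> Xg" using xy xyc by simp
  qed
  have XM: "Xg \<inter> M = {\<one>}"
    using XZ MZ1 sg_one[OF Xsg] by blast
  have maxp: "carrier G \<subseteq> N <#> M" if N: "subgroup N G" "\<not> N \<subseteq> M" for N
  proof
    fix g assume g: "g \<in> carrier G"
    obtain n0 where n0: "n0 \<in> N" "n0 \<notin> M" using N by blast
    have n0c: "n0 \<in> carrier G" using sg_sub[OF N(1) n0(1)] .
    have "n0 \<in> M <#> Z" using MZ n0c by simp
    then obtain m1 z1 where mz1: "m1 \<in> M" "z1 \<in> Z" "n0 = m1 \<otimes> z1" unfolding set_mult_iff by blast
    have mz1c: "m1 \<in> carrier G" "z1 \<in> carrier G" using mz1 Mc Zc by auto
    have z11: "z1 \<noteq> \<one>" using mz1 n0 mz1c by auto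
    obtain k1 :: int where k1: "zx = z1 [^] k1" using STAR[OF mz1(2) z11] by blast
    have "g \<in> M <#> Z" using MZ g by simp
    then obtain m2 z2 where mz2: "m2 \<in> M" "z2 \<in> Z" "g = m2 \<otimes> z2" unfolding set_mult_iff by blast
    have mz2c: "m2 \<in> carrier G" "z2 \<in> carrier G" using mz2 Mc Zc by auto
    have "z2 \<in> Xg" using ZX mz2(2) by blast
    then obtain j :: int where j: "z2 = zx [^] j" unfolding Xg_def generate_pow[OF m0c(2)] by blast
    have z1eq: "z1 = inv m1 \<otimes> n0" using mz1(3) mz1c by (simp add: cancel0 flip: m_assoc)
    have "z2 = z1 [^] (k1 * j)" using j k1 mz1c by (simp add: int_pow_pow)
    also have "\<dots> = (inv m1) [^] (k1 * j) \<otimes> n0 [^] (k1 * j)"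
      using z1eq mz1c n0c by (simp add: int_pow_distrib)
    finally have "g = n0 [^] (k1 * j) \<otimes> (m2 \<otimes> (inv m1) [^] (k1 * j))"
      using mz2(3) mz2c mz1c n0c by (simp add: m_ac)
    moreover have "n0 [^] (k1 * j) \<in> N" using subgroup_int_pow_closed[OF N(1) n0(1)] .
    moreover have "m2 \<otimes> (inv m1) [^] (k1 * j) \<in> M"
      using sg_mult[OF Msg mz2(1) subgroup_int_pow_closed[OF Msg sg_inv[OF Msg mz1(1)]]] .
    ultimately show "g \<in> N <#> M" unfolding set_mult_iff by blast
  qed
  have "Factorial_Ring.prime (card Xg)" using Xcard p(1) by simp
  then have "msub M" unfolding msub_def
    using Mcl Msg Xsg XM maxp by blast
  then show ?thesis using xM by blast
qed

lemma msub_closed: "msub M \<Longrightarrow> closedin T M" by (simp add: msub_def)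
lemma msub_sg: "msub M \<Longrightarrow> subgroup M G" by (simp add: msub_def)
lemma msub_sub: "msub M \<Longrightarrow> M \<subseteq> carrier G" using msub_sg subgroup.subset by blast
lemma msub_max: "msub M \<Longrightarrow> subgroup N G \<Longrightarrow> \<not> N \<subseteq> M \<Longrightarrow> carrier G \<subseteq> N <#> M"
  by (simp add: msub_def)

lemma msub_Z:
  assumes "msub M"
  shows "\<exists>Z. subgroup Z G \<and> Factorial_Ring.prime (card Z) \<and> Z \<inter> M = {\<one>} \<and>
    carrier G \<subseteq> Z <#> M \<and> finite Z"
proof -
  have "\<exists>Z. subgroup Z G \<and> Factorial_Ring.prime (card Z) \<and> Z \<inter> M = {\<one>}"
    using assms unfolding msub_def by (elim conjE) assumption
  then obtain Z where Z: "subgroup Z G" "Factorial_Ring.prime (card Z)" "Z \<inter> M = {\<one>}"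
    by blast
  have fin: "finite Z"
  proof (rule ccontr)
    assume "infinite Z"
    then have "card Z = 0" by simp
    then show False using Z(2) by simp
  qed
  have "Z \<noteq> {\<one>}"
  proof
    assume "Z = {\<one>}"
    then have "card Z = 1" by simp
    then show False using Z(2) by simp
  qed
  moreover have "\<one> \<in> Z" using sg_one[OF Z(1)] .
  ultimately obtain z where z: "z \<in> Z" "z \<noteq> \<one>" by blast
  then have "z \<notin> M" using Z(3) by blast
  then have "\<not> Z \<subseteq> M" using z by blast
  then have "carrier G \<subseteq> Z <#> M" using msub_max[OF assms Z(1)] by blast
  then show ?thesis using Z fin by blast
qed

lemma msub_compl_closed:
  assumes "msub M"
  shows "closedin T (carrier G - M)"
proof -
  obtain Z where Z: "subgroup Z G" "Z \<inter> M = {\<one>}" "carrier G \<subseteq> Z <#> M" "finite Z"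
    using msub_Z[OF assms] by blast
  have Mc: "M \<subseteq> carrier G" using msub_sub[OF assms] .
  have Zc: "Z \<subseteq> carrier G" using Z(1) subgroup.subset by blast
  have eq: "carrier G - M = (Z - {\<one>}) <#> M"
  proof (rule Set.set_eqI)
    fix y
    show "y \<in> carrier G - M \<longleftrightarrow> y \<in> (Z - {\<one>}) <#> M"
    proof
      assume y: "y \<in> carrier G - M"
      then have "y \<in> Z <#> M" using Z(3) by blast
      then obtain z m where zm: "z \<in> Z" "m \<in> M" "y = z \<otimes> m" unfolding set_mult_iff by blast
      have "z \<noteq> \<one>"
      proof
        assume "z = \<one>"
        then have "y = m" using zm Mc by auto
        then show False using y zm by blast
      qed
      then show "y \<in> (Z - {\<one>}) <#> M" using zm unfolding set_mult_iff by blast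
    next
      assume "y \<in> (Z - {\<one>}) <#> M"
      then obtain z m where zm: "z \<in> Z" "z \<noteq> \<one>" "m \<in> M" "y = z \<otimes> m" unfolding set_mult_iff by blast
      have zc: "z \<in> carrier G" "m \<in> carrier G" using zm Zc Mc by auto
      have "y \<notin> M"
      proof
        assume yM: "y \<in> M"
        have "z = (z \<otimes> m) \<otimes> inv m" using zc by (simp add: cancel4)
        also have "\<dots> \<in> M" using sg_mult[OF msub_sg[OF assms] _ sg_inv[OF msub_sg[OF assms] zm(3)]] yM zm(4) by simp
        finally have "z \<in> M" .
        then show False using Z(2) zm(1,2) by blast
      qed
      then show "y \<in> carrier G - M" using zm(4) zc by simp
    qed
  qed
  show ?thesis unfolding eq
    by (rule closed_finite_mult) (use Z(4) Zc msub_closed[OF assms] in auto)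
qed

lemma card_le_compl:
  assumes A: "subgroup A G" and B: "subgroup B G" and M: "subgroup M G"
    and AM: "A \<inter> M = {\<one>}" and BM: "carrier G \<subseteq> B <#> M" and fB: "finite B"
  shows "finite A \<and> card A \<le> card B"
proof -
  have Ac: "A \<subseteq> carrier G" using A subgroup.subset by blast
  have Bc: "B \<subseteq> carrier G" using B subgroup.subset by blast
  have Mc: "M \<subseteq> carrier G" using M subgroup.subset by blast
  define f where "f a = (SOME b. b \<in> B \<and> (\<exists>m\<in>M. a = b \<otimes> m))" for a
  have f: "f a \<in> B \<and> (\<exists>m\<in>M. a = f a \<otimes> m)" if a: "a \<in> A" for a
  proof -
    have "a \<in> B <#> M" using a Ac BM by blast
    then have "\<exists>b. b \<in> B \<and> (\<exists>m\<in>M. a = b \<otimes> m)" unfolding set_mult_iff by blast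
    then show ?thesis unfolding f_def by (rule someI_ex)
  qed
  have inj: "inj_on f A"
  proof (rule inj_onI)
    fix a1 a2 assume a1: "a1 \<in> A" and a2: "a2 \<in> A" and eq: "f a1 = f a2"
    obtain m1 where m1: "m1 \<in> M" "a1 = f a1 \<otimes> m1" using f[OF a1] by blast
    obtain m2 where m2: "m2 \<in> M" "a2 = f a2 \<otimes> m2" using f[OF a2] by blast
    have bc: "f a1 \<in> carrier G" using f[OF a1] Bc by blast
    have mc: "m1 \<in> carrier G" "m2 \<in> carrier G" using m1 m2 Mc by auto
    have ac: "a1 \<in> carrier G" "a2 \<in> carrier G" using a1 a2 Ac by auto
    have "inv a2 \<otimes> a1 = inv (f a1 \<otimes> m2) \<otimes> (f a1 \<otimes> m1)" using m1(2) m2(2) eq by simp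
    also have "\<dots> = inv m2 \<otimes> m1" using bc mc by (simp add: cancel1)
    finally have e: "inv a2 \<otimes> a1 = inv m2 \<otimes> m1" .
    have "inv m2 \<otimes> m1 \<in> M" using sg_mult[OF M sg_inv[OF M m2(1)] m1(1)] .
    moreover have "inv a2 \<otimes> a1 \<in> A" using sg_mult[OF A sg_inv[OF A a2] a1] .
    ultimately have "inv a2 \<otimes> a1 = \<one>" using e AM by auto
    then have "a2 \<otimes> (inv a2 \<otimes> a1) = a2" using ac by simp
    then show "a1 = a2" using ac by (simp add: cancel0)
  qed
  have img: "f ` A \<subseteq> B" using f by blast
  show ?thesis using inj_on_finite[OF inj img fB] card_inj_on_le[OF inj img fB] by blast
qed

definition indep :: "'a set set \<Rightarrow> bool" where
  "indep MM \<longleftrightarrow> (\<forall>M\<in>MM. msub M) \<and>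
     (\<forall>M\<in>MM. \<exists>q\<in>carrier G. q \<notin> M \<and> (\<forall>M'\<in>MM - {M}. q \<in> M'))"

lemma indep_chain:
  assumes "C \<in> chains {MM. indep MM}"
  shows "indep (\<Union>C)"
proof -
  have C: "C \<subseteq> {MM. indep MM}" "chain\<^sub>\<subseteq> C" using assms by (auto simp: chains_def)
  have ms: "msub M" if "M \<in> \<Union>C" for M
    using that C(1) by (auto simp: indep_def)
  have "\<exists>q\<in>carrier G. q \<notin> M \<and> (\<forall>M'\<in>\<Union>C - {M}. q \<in> M')" if M: "M \<in> \<Union>C" for M
  proof -
    obtain MM0 where MM0: "MM0 \<in> C" "M \<in> MM0" using M by blast
    have Cne: "C \<noteq> {}" using MM0 by blast
    have sch: "subset.chain UNIV C" using C(2) chain_subset_alt_def by blast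
    let ?U = "insert (carrier G - M) (\<Union>C - {M})"
    have "\<Inter>?U \<noteq> {}"
    proof (rule fip)
      fix S assume "S \<in> ?U"
      then show "closedin T S" using msub_compl_closed[OF ms[OF M]] msub_closed ms by blast
    next
      fix F assume F: "finite F" "F \<subseteq> ?U"
      define F' where "F' = F - {carrier G - M}"
      have F': "finite (insert M F')" "insert M F' \<subseteq> \<Union>C" using F M by (auto simp: F'_def)
      obtain MM1 where MM1: "MM1 \<in> C" "insert M F' \<subseteq> MM1"
        using finite_subset_Union_chain[OF F' Cne sch] by blast
      have "indep MM1" using MM1(1) C(1) by blast
      then obtain q where q: "q \<in> carrier G" "q \<notin> M" "\<forall>M'\<in>MM1 - {M}. q \<in> M'"
        using MM1(2) unfolding indep_def by blast
      have "q \<in> \<Inter>F"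
      proof
        fix S assume S: "S \<in> F"
        show "q \<in> S"
        proof (cases "S = carrier G - M")
          case True then show ?thesis using q by simp
        next
          case False
          then have "S \<in> F'" using S by (simp add: F'_def)
          moreover have "S \<noteq> M" using S F(2) False by blast
          ultimately show ?thesis using q(3) MM1(2) by blast
        qed
      qed
      then show "\<Inter>F \<noteq> {}" by blast
    qed
    then obtain q where "q \<in> \<Inter>?U" by blast
    then show ?thesis by blast
  qed
  then show ?thesis using ms by (simp add: indep_def)
qed

lemma max_indep:
  assumes Cg: "profinite_C_group G T"
  shows "\<exists>MM. indep MM \<and> carrier G \<inter> \<Inter>MM = {\<one>}"
proof -
  have "\<exists>MM\<in>{MM. indep MM}. \<forall>X2\<in>{MM. indep MM}. MM \<subseteq> X2 \<longrightarrow> X2 = MM"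
  proof (rule Zorn_Lemma, intro ballI)
    fix C assume "C \<in> chains {MM. indep MM}"
    then show "\<Union>C \<in> {MM. indep MM}" using indep_chain by blast
  qed
  then obtain MM where MM: "indep MM" and Mmax: "\<forall>X2. indep X2 \<longrightarrow> MM \<subseteq> X2 \<longrightarrow> X2 = MM"
    by blast
  have ms: "msub M" if "M \<in> MM" for M using MM that by (simp add: indep_def)
  have one: "\<one> \<in> carrier G \<inter> \<Inter>MM" using sg_one[OF msub_sg[OF ms]] by blast
  have "carrier G \<inter> \<Inter>MM \<subseteq> {\<one>}"
  proof
    fix x assume x: "x \<in> carrier G \<inter> \<Inter>MM"
    show "x \<in> {\<one>}"
    proof (rule ccontr)
      assume "x \<notin> {\<one>}"
      then have x1: "x \<noteq> \<one>" by simp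
      obtain M' where M': "msub M'" "x \<notin> M'" using exists_msub[OF Cg _ x1] x by blast
      have M'n: "M' \<notin> MM" using x M'(2) by blast
      define N where "N = \<Inter>(insert (carrier G) MM)"
      have Neq: "N = carrier G \<inter> \<Inter>MM" by (simp add: N_def)
      have Nsg: "subgroup N G" unfolding N_def
      proof (rule subgroups_Inter)
        fix S assume "S \<in> insert (carrier G) MM"
        then show "subgroup S G" using subgroup_self msub_sg[OF ms] by blast
      qed simp
      have "x \<in> N" using x Neq by simp
      then have "\<not> N \<subseteq> M'" using M'(2) by blast
      then have NM': "carrier G \<subseteq> N <#> M'" using msub_max[OF M'(1) Nsg] by blast
      have "indep (insert M' MM)"
        unfolding indep_def
      proof (intro conjI ballI)
        fix M assume "M \<in> insert M' MM"
        then show "msub M" using M'(1) ms by blast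
      next
        fix M assume M: "M \<in> insert M' MM"
        show "\<exists>q\<in>carrier G. q \<notin> M \<and> (\<forall>M''\<in>insert M' MM - {M}. q \<in> M'')"
        proof (cases "M = M'")
          case True
          then show ?thesis using x M'(2) M'n by auto
        next
          case False
          then have MinMM: "M \<in> MM" using M by blast
          obtain q where q: "q \<in> carrier G" "q \<notin> M" "\<forall>M''\<in>MM - {M}. q \<in> M''"
            using MM MinMM unfolding indep_def by blast
          have "q \<in> N <#> M'" using q(1) NM' by blast
          then obtain n m' where nm: "n \<in> N" "m' \<in> M'" "q = n \<otimes> m'" unfolding set_mult_iff by blast
          have nc: "n \<in> carrier G" "m' \<in> carrier G" using nm(1) Neq msub_sub[OF M'(1)] nm(2) by auto
          have meq: "m' = inv n \<otimes> q" using nm(3) nc by (simp add: cancel0 flip: m_assoc)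
          have "m' \<notin> M"
          proof
            assume "m' \<in> M"
            moreover have "n \<in> M" using nm(1) Neq MinMM by blast
            ultimately have "n \<otimes> m' \<in> M" using sg_mult[OF msub_sg[OF ms[OF MinMM]]] by blast
            then show False using nm(3) q(2) by simp
          qed
          moreover have "m' \<in> M''" if M'': "M'' \<in> insert M' MM - {M}" for M''
          proof (cases "M'' = M'")
            case True then show ?thesis using nm(2) by simp
          next
            case False
            then have M''2: "M'' \<in> MM - {M}" using M'' by blast
            have "n \<in> M''" using nm(1) Neq M''2 by blast
            then have "inv n \<otimes> q \<in> M''"
              using sg_mult[OF msub_sg[OF ms] sg_inv[OF msub_sg[OF ms]]] q(3) M''2 by blast
            then show ?thesis using meq by simp
          qed
          ultimately show ?thesis using nc(2) by blast
        qed
      qed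
      then have "insert M' MM = MM" using Mmax by blast
      then show False using M'n by blast
    qed
  qed
  then show ?thesis using MM one by blast
qed

lemma forward_dir:
  assumes Cg: "profinite_C_group G T"
  shows "\<exists>(I :: 'a set set) H. internal_cartesian_product G T I H \<and>
                (\<forall>i\<in>I. Factorial_Ring.prime (card (H i)))"
proof -
  obtain MM where MM: "indep MM" and MM1: "carrier G \<inter> \<Inter>MM = {\<one>}"
    using max_indep[OF Cg] by blast
  have ms: "msub M" if "M \<in> MM" for M using MM that by (simp add: indep_def)
  define P where "P M = \<Inter>(insert (carrier G) (MM - {M}))" for M
  have Pc: "P M \<subseteq> carrier G" for M by (auto simp: P_def)
  have Psg: "subgroup (P M) G" for M unfolding P_def
  proof (rule subgroups_Inter)
    fix S assume "S \<in> insert (carrier G) (MM - {M})"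
    then show "subgroup S G" using subgroup_self msub_sg[OF ms] by blast
  qed simp
  have Pcl: "closedin T (P M)" for M unfolding P_def
  proof (rule closedin_Inter)
    fix S assume "S \<in> insert (carrier G) (MM - {M})"
    then show "closedin T S" using closedin_topspace[of T] top msub_closed[OF ms] by auto
  qed simp
  have PM'': "P M \<subseteq> M''" if "M'' \<in> MM" "M'' \<noteq> M" for M M''
    using that by (auto simp: P_def)
  have PM1: "P M \<inter> M = {\<one>}" if M: "M \<in> MM" for M
  proof
    show "P M \<inter> M \<subseteq> {\<one>}"
    proof
      fix y assume "y \<in> P M \<inter> M"
      then have "y \<in> carrier G \<inter> \<Inter>MM" by (auto simp: P_def)
      then show "y \<in> {\<one>}" using MM1 by simp
    qed
    show "{\<one>} \<subseteq> P M \<inter> M" using sg_one[OF Psg] sg_one[OF msub_sg[OF ms[OF M]]] by blast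
  qed
  have PnM: "\<not> P M \<subseteq> M" if M: "M \<in> MM" for M
  proof -
    obtain q where q: "q \<in> carrier G" "q \<notin> M" "\<forall>M'\<in>MM - {M}. q \<in> M'"
      using MM M unfolding indep_def by blast
    then have "q \<in> P M" by (auto simp: P_def)
    then show ?thesis using q(2) by blast
  qed
  have PMg: "carrier G \<subseteq> P M <#> M" if M: "M \<in> MM" for M
    using msub_max[OF ms[OF M] Psg PnM[OF M]] .
  have Pprime: "Factorial_Ring.prime (card (P M))" if M: "M \<in> MM" for M
  proof -
    obtain Z where Z: "subgroup Z G" "Factorial_Ring.prime (card Z)" "Z \<inter> M = {\<one>}"
        "carrier G \<subseteq> Z <#> M" "finite Z"
      using msub_Z[OF ms[OF M]] by blast
    have c1: "finite (P M) \<and> card (P M) \<le> card Z"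
      using card_le_compl[OF Psg Z(1) msub_sg[OF ms[OF M]] PM1[OF M] Z(4) Z(5)] .
    have c2: "finite Z \<and> card Z \<le> card (P M)"
      using card_le_compl[OF Z(1) Psg msub_sg[OF ms[OF M]] Z(3) PMg[OF M]] c1 by blast
    have "card (P M) = card Z" using c1 c2 by simp
    then show ?thesis using Z(2) by simp
  qed
  define GEN where "GEN = generate G (\<Union>M\<in>MM. P M)"
  have GENc: "GEN \<subseteq> carrier G"
    unfolding GEN_def using generate_is_subgroup[of "\<Union>M\<in>MM. P M"] Pc subgroup.subset by blast
  define L where "L = T closure_of GEN"
  have Lcl: "closedin T L" by (simp add: L_def)
  have GENL: "GEN \<subseteq> L" unfolding L_def using closure_of_subset[of GEN T] GENc top by simp
  have claim: "\<forall>g\<in>carrier G. \<exists>y\<in>carrier G. (\<forall>M\<in>F. y \<in> M) \<and> inv y \<otimes> g \<in> GEN"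
    if "finite F" "F \<subseteq> MM" for F
    using that
  proof (induction F rule: finite_induct)
    case empty
    show ?case
    proof
      fix g assume g: "g \<in> carrier G"
      have "inv g \<otimes> g \<in> GEN" using g generate.one by (simp add: GEN_def)
      then show "\<exists>y\<in>carrier G. (\<forall>M\<in>{}. y \<in> M) \<and> inv y \<otimes> g \<in> GEN" using g by blast
    qed
  next
    case (insert M F)
    have M: "M \<in> MM" and FM: "F \<subseteq> MM" using insert.prems by auto
    show ?case
    proof
      fix g assume g: "g \<in> carrier G"
      obtain y where y: "y \<in> carrier G" "\<forall>M\<in>F. y \<in> M" "inv y \<otimes> g \<in> GEN"
        using insert.IH[OF FM] g by blast
      have "y \<in> P M <#> M" using PMg[OF M] y(1) by blast
      then obtain p m where pm: "p \<in> P M" "m \<in> M" "y = p \<otimes> m" unfolding set_mult_iff by blast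
      have pc: "p \<in> carrier G" "m \<in> carrier G" using pm Pc msub_sub[OF ms[OF M]] by auto
      have meq: "m = inv p \<otimes> y" using pm(3) pc by (simp add: cancel0 flip: m_assoc)
      have mF: "m \<in> M''" if M'': "M'' \<in> insert M F" for M''
      proof (cases "M'' = M")
        case True then show ?thesis using pm(2) by simp
      next
        case False
        then have M''F: "M'' \<in> F" using M'' by blast
        then have M''MM: "M'' \<in> MM" using FM by blast
        have "p \<in> M''" using PM''[OF M''MM False] pm(1) by blast
        then have "inv p \<otimes> y \<in> M''"
          using sg_mult[OF msub_sg[OF ms[OF M''MM]] sg_inv[OF msub_sg[OF ms[OF M''MM]]]] y(2) M''F by blast
        then show ?thesis using meq by simp
      qed
      have "p \<in> GEN" unfolding GEN_def using pm(1) M by (intro generate.incl) blast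
      then have pG: "p \<otimes> (inv y \<otimes> g) \<in> GEN" using y(3) unfolding GEN_def by (rule generate.eng)
      have "p \<otimes> (inv y \<otimes> g) = inv m \<otimes> g" using pm(3) pc g by (simp add: inv_mult m_assoc cancel0)
      then have "inv m \<otimes> g \<in> GEN" using pG by simp
      then show "\<exists>y\<in>carrier G. (\<forall>M\<in>insert M F. y \<in> M) \<and> inv y \<otimes> g \<in> GEN"
        using mF pc(2) by blast
    qed
  qed
  have Lfull: "L = carrier G"
  proof
    show "L \<subseteq> carrier G" unfolding L_def using closure_of_subset_topspace[of T GEN] top by simp
    show "carrier G \<subseteq> L"
    proof
      fix g assume g: "g \<in> carrier G"
      define S0 where "S0 = {y \<in> carrier G. inv y \<otimes> g \<in> L}"
      have S0cl: "closedin T S0" unfolding S0_def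
        by (rule closed_pre[OF cont_mult[OF cont_inv[OF cont_id] cont_const[OF g]] Lcl])
      let ?U = "insert S0 MM"
      have "\<Inter>?U \<noteq> {}"
      proof (rule fip)
        fix S assume "S \<in> ?U"
        then show "closedin T S" using S0cl msub_closed[OF ms] by blast
      next
        fix F assume F: "finite F" "F \<subseteq> ?U"
        define F' where "F' = F - {S0}"
        have F': "finite F'" "F' \<subseteq> MM" using F by (auto simp: F'_def)
        obtain y where y: "y \<in> carrier G" "\<forall>M\<in>F'. y \<in> M" "inv y \<otimes> g \<in> GEN"
          using claim[OF F'] g by blast
        have "y \<in> S0" using y(1,3) GENL by (auto simp: S0_def)
        then have "y \<in> \<Inter>F" using y(2) by (auto simp: F'_def)
        then show "\<Inter>F \<noteq> {}" by blast
      qed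
      then obtain y where y: "y \<in> \<Inter>?U" by blast
      then have "y \<in> carrier G \<inter> \<Inter>MM" by (auto simp: S0_def)
      then have "y = \<one>" using MM1 by blast
      moreover have "inv y \<otimes> g \<in> L" using y by (auto simp: S0_def)
      ultimately show "g \<in> L" using g by simp
    qed
  qed
  have icp3: "carrier G \<inter> (\<Inter>M\<in>MM. T closure_of (generate G (\<Union>M'\<in>MM - {M}. P M'))) = {\<one>}"
  proof
    have sub: "T closure_of (generate G (\<Union>M'\<in>MM - {M}. P M')) \<subseteq> M" if M: "M \<in> MM" for M
    proof -
      have "(\<Union>M'\<in>MM - {M}. P M') \<subseteq> M" using PM''[OF M] by blast
      then have "generate G (\<Union>M'\<in>MM - {M}. P M') \<subseteq> M"
        by (rule generate_subgroup_incl[OF _ msub_sg[OF ms[OF M]]])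
      then show ?thesis by (rule closure_of_minimal[OF _ msub_closed[OF ms[OF M]]])
    qed
    show "carrier G \<inter> (\<Inter>M\<in>MM. T closure_of (generate G (\<Union>M'\<in>MM - {M}. P M'))) \<subseteq> {\<one>}"
      using sub MM1 by blast
    have one: "\<one> \<in> T closure_of (generate G (\<Union>M'\<in>MM - {M}. P M'))" for M
    proof -
      have gc: "generate G (\<Union>M'\<in>MM - {M}. P M') \<subseteq> carrier G"
        using generate_is_subgroup[of "\<Union>M'\<in>MM - {M}. P M'"] Pc subgroup.subset by blast
      have "\<one> \<in> generate G (\<Union>M'\<in>MM - {M}. P M')" by (rule generate.one)
      then show ?thesis using closure_of_subset[of _ T] gc top by blast
    qed
    show "{\<one>} \<subseteq> carrier G \<inter> (\<Inter>M\<in>MM. T closure_of (generate G (\<Union>M'\<in>MM - {M}. P M')))"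
      using one by blast
  qed
  have "internal_cartesian_product G T MM P"
    unfolding internal_cartesian_product_def
  proof (intro conjI)
    show "\<forall>i\<in>MM. closedin T (P i) \<and> P i \<lhd> G" using Pcl Psg subgroup_imp_normal by blast
    show "T closure_of generate G (\<Union>i\<in>MM. P i) = carrier G" using Lfull by (simp add: L_def GEN_def)
    show "carrier G \<inter> (\<Inter>i\<in>MM. T closure_of generate G (\<Union>j\<in>MM - {i}. P j)) = {\<one>}" using icp3 .
  qed
  then show ?thesis using Pprime by blast
qed

end

theorem corollary2p10:
  fixes G :: "('a, 'b) monoid_scheme" and T :: "'a topology"
  assumes "profinite_group G T" and "comm_group G"
  shows "profinite_C_group G T \<longleftrightarrow>
           (\<exists>(I :: 'a set set) H. internal_cartesian_product G T I H \<and>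
                (\<forall>i\<in>I. Factorial_Ring.prime (card (H i))))"
proof -
  interpret abprof G T
    using assms by (simp add: abprof_def abprof_axioms_def)
  show ?thesis
  proof
    assume "profinite_C_group G T"
    then show "\<exists>(I :: 'a set set) H. internal_cartesian_product G T I H \<and>
                (\<forall>i\<in>I. Factorial_Ring.prime (card (H i)))"
      by (rule forward_dir)
  next
    assume "\<exists>(I :: 'a set set) H. internal_cartesian_product G T I H \<and>
                (\<forall>i\<in>I. Factorial_Ring.prime (card (H i)))"
    then show "profinite_C_group G T" using back_dir by blast
  qed
qed

end
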